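(* Let $L=(l_1,\dots,l_n)$, $n\ge 4$, be a generic length vector satisfying the strict triangle inequality, and let $l_a\ge l_b\ge l_c$ be its three largest entries (for distinct indices $a,b,c$). Suppose $l_b+l_c<|L|/2$. Then for every vertex $(I,J,K)$ of $\Gamma(L)$ there is a path in $\Gamma(L)$ of length at most $6$ from $(I,J,K)$ to its mirror image $(J,I,K)$.
   Context: Let $n\ge 4$ and $L=(l_1,\dots,l_n)$ be positive reals with $l_i<\sum_{j\ne i}l_j$ for every $i$ (strict triangle inequality), and generic: there is no $J\subseteq[n]$ with $\sum_{i\in J}l_i=\sum_{i\notin J}l_i$. Here $[n]=\{1,\dots,n\}$ and $|L|=\sum_{i=1}^n l_i$. A set $I\subseteq[n]$ is short if $\sum_{i\in I}l_i<|L|/2$ and long otherwise. A cyclically ordered partition of $[n]$ into $k$ parts is a sequence $(A_1,\dots,A_k)$ of pairwise disjoint nonempty sets with union $[n]$, considered up to cyclic shifts $(A_1,\dots,A_k)\sim(A_2,\dots,A_k,A_1)$; there is no ordering inside a part. It is admissible if every part is short. The graph $\Gamma(L)$ has as vertices the admissible cyclically ordered partitions of $[n]$ into 3 parts, written $(I,J,K)$, and as edges the admissible cyclically ordered partitions into 4 parts $(A,B,C,D)$; such an edge is incident to each of the partitions $(A\cup B,C,D)$, $(A,B\cup C,D)$, $(A,B,C\cup D)$, $(D\cup A,B,C)$ that is admissible. Equivalently, two vertices are adjacent iff one is obtained from the other by moving a nonempty proper subset of one part into another part. The length of a path is its number of edges. The mirror image of a vertex $(I,J,K)$ is the vertex $(J,I,K)$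 (same parts, reversed cyclic order). (The condition $l_b+l_c<|L|/2$ is equivalent to connectedness of the moduli space of planar configurations of $L$.) *)

theory Defs
  imports Complex_Main
begin

text \<open>Lengths are a function l on the index set [n] = {1..n}.\<close>

definition total_len :: "(nat \<Rightarrow> real) \<Rightarrow> nat \<Rightarrow> real" where
  "total_len l n = (\<Sum>i\<in>{1..n}. l i)"

definition short :: "(nat \<Rightarrow> real) \<Rightarrow> nat \<Rightarrow> nat set \<Rightarrow> bool" where
  "short l n I \<longleftrightarrow> (\<Sum>i\<in>I. l i) < total_len l n / 2"

definition length_vector :: "(nat \<Rightarrow> real) \<Rightarrow> nat \<Rightarrow> bool" where
  "length_vector l n \<longleftrightarrow> (\<forall>i\<in>{1..n}. 0 < l i)
     \<and> (\<forall>i\<in>{1..n}. l i < (\<Sum>j\<in>{1..n}-{i}. l j))"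

definition generic :: "(nat \<Rightarrow> real) \<Rightarrow> nat \<Rightarrow> bool" where
  "generic l n \<longleftrightarrow> (\<forall>J. J \<subseteq> {1..n} \<longrightarrow> (\<Sum>i\<in>J. l i) \<noteq> (\<Sum>i\<in>{1..n}-J. l i))"

text \<open>Admissible ordered partition of [n] given as a list of parts (a representative
  of a cyclically ordered partition).\<close>
definition admissible :: "(nat \<Rightarrow> real) \<Rightarrow> nat \<Rightarrow> nat set list \<Rightarrow> bool" where
  "admissible l n ps \<longleftrightarrow> (\<forall>A\<in>set ps. A \<noteq> {} \<and> short l n A)
     \<and> (\<forall>i<length ps. \<forall>j<length ps. i \<noteq> j \<longrightarrow> ps!i \<inter> ps!j = {})
     \<and> \<Union>(set ps) = {1..n}"

definition cyc_eq :: "'a list \<Rightarrow> 'a list \<Rightarrow> bool" where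
  "cyc_eq xs ys \<longleftrightarrow> (\<exists>k. ys = rotate k xs)"

text \<open>Vertices of Gamma(L): admissible cyclically ordered 3-partitions.\<close>
definition gvertex :: "(nat \<Rightarrow> real) \<Rightarrow> nat \<Rightarrow> nat set list \<Rightarrow> bool" where
  "gvertex l n v \<longleftrightarrow> length v = 3 \<and> admissible l n v"

definition merges :: "nat set list \<Rightarrow> nat set list set" where
  "merges e = {[e!0 \<union> e!1, e!2, e!3], [e!0, e!1 \<union> e!2, e!3],
               [e!0, e!1, e!2 \<union> e!3], [e!3 \<union> e!0, e!1, e!2]}"

text \<open>An edge (admissible cyclically ordered 4-partition e) joins v and w if v and w
  are (up to cyclic shift) two distinct admissible merges of e.\<close>
definition gadj :: "(nat \<Rightarrow> real) \<Rightarrow> nat \<Rightarrow> nat set list \<Rightarrow> nat set list \<Rightarrow> bool" where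
  "gadj l n v w \<longleftrightarrow> gvertex l n v \<and> gvertex l n w \<and> \<not> cyc_eq v w \<and>
     (\<exists>e. length e = 4 \<and> admissible l n e \<and>
        (\<exists>p\<in>merges e. \<exists>q\<in>merges e. cyc_eq p v \<and> cyc_eq q w))"

text \<open>A path of length k from v to w: a list of k+1 vertices with consecutive ones
  adjacent; endpoints are compared up to cyclic shift.\<close>
definition gpath :: "(nat \<Rightarrow> real) \<Rightarrow> nat \<Rightarrow> nat set list list \<Rightarrow> bool" where
  "gpath l n ps \<longleftrightarrow> ps \<noteq> [] \<and> (\<forall>i. Suc i < length ps \<longrightarrow> gadj l n (ps!i) (ps!Suc i))
      \<and> (\<forall>p\<in>set ps. gvertex l n p)"

definition mirror :: "nat set list \<Rightarrow> nat set list" where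
  "mirror v = [v!1, v!0, v!2]"

end

theory Submission
  imports Defs
begin


lemma all3: "(\<forall>i<(3::nat). P i) \<longleftrightarrow> P 0 \<and> P (Suc 0) \<and> P (Suc (Suc 0))"
  by (auto simp: numeral_3_eq_3 less_Suc_eq)


lemma all4S: "(\<forall>i<Suc (Suc (Suc (Suc 0))). P i) \<longleftrightarrow> P 0 \<and> P (Suc 0) \<and> P (Suc (Suc 0)) \<and> P (Suc (Suc (Suc 0)))"
  by (auto simp: less_Suc_eq)

lemma gv3: "gvertex l n [A,B,C] \<longleftrightarrow> A\<noteq>{} \<and> B\<noteq>{} \<and> C\<noteq>{} \<and> short l n A \<and> short l n B \<and> short l n C
   \<and> A\<inter>B={} \<and> A\<inter>C={} \<and> B\<inter>C={} \<and> A\<union>B\<union>C={1..n}"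
  unfolding gvertex_def admissible_def
  apply (simp only: length_Cons list.size numeral_3_eq_3[symmetric] all3 simp_thms)
  apply (simp add: Int_commute)
  apply blast
  done

lemma adm4: "A\<noteq>{} \<Longrightarrow> B\<noteq>{} \<Longrightarrow> C\<noteq>{} \<Longrightarrow> D\<noteq>{} \<Longrightarrow> short l n A \<Longrightarrow> short l n B \<Longrightarrow> short l n C \<Longrightarrow> short l n D
   \<Longrightarrow> A\<inter>B={} \<Longrightarrow> A\<inter>C={} \<Longrightarrow> A\<inter>D={} \<Longrightarrow> B\<inter>C={} \<Longrightarrow> B\<inter>D={} \<Longrightarrow> C\<inter>D={} \<Longrightarrow> A\<union>B\<union>C\<union>D={1..n}
   \<Longrightarrow> admissible l n [A,B,C,D]"
  unfolding admissible_def
  apply (simp only: length_Cons list.size all4S)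
  apply (simp add: Int_commute Un_assoc)
  done

lemma ncyc: "x \<in> set ys \<Longrightarrow> x \<notin> set xs \<Longrightarrow> \<not> cyc_eq xs ys"
  unfolding cyc_eq_def by auto

lemma cyc_refl: "cyc_eq xs xs"
  unfolding cyc_eq_def by (rule exI[of _ 0]) simp

lemma cyc_rot1: "cyc_eq [A,B,C] [B,C,A]"
  unfolding cyc_eq_def by (rule exI[of _ 1]) simp

lemma cyc_rot2: "cyc_eq [A,B,C] [C,A,B]"
  unfolding cyc_eq_def by (rule exI[of _ 2]) (simp add: numeral_2_eq_2)

lemma cyc_trans: "cyc_eq xs ys \<Longrightarrow> cyc_eq ys zs \<Longrightarrow> cyc_eq xs zs"
  unfolding cyc_eq_def by (metis rotate_rotate)

lemma cyc_sym: "cyc_eq xs ys \<Longrightarrow> cyc_eq ys xs"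
proof -
  assume "cyc_eq xs ys"
  then obtain k where k: "ys = rotate k xs" unfolding cyc_eq_def by blast
  show ?thesis
  proof (cases "xs = []")
    case True thus ?thesis using k by (simp add: cyc_eq_def)
  next
    case False
    define m where "m = length xs - k mod length xs"
    have "rotate m ys = rotate (m + k) xs" using k by (simp add: rotate_rotate)
    also have "m + k = length xs + (k div length xs) * length xs"
    proof -
      have "k mod length xs < length xs" using False by simp
      moreover have "k = (k div length xs) * length xs + k mod length xs" by simp
      ultimately show ?thesis unfolding m_def by linarith
    qed
    also have "rotate (length xs + (k div length xs) * length xs) xs = xs"
      by (subst rotate_conv_mod) simp
    finally show ?thesis unfolding cyc_eq_def by metis
  qed
qed

lemma merges4: "merges [A,B,C,D] = {[A\<union>B,C,D],[A,B\<union>C,D],[A,B,C\<union>D],[D\<union>A,B,C]}"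
  by (simp add: merges_def numeral_3_eq_3 numeral_2_eq_2)

lemma gadj_sym: "gadj l n v w \<Longrightarrow> gadj l n w v"
  unfolding gadj_def using cyc_sym by blast



definition P4 :: "(nat \<Rightarrow> real) \<Rightarrow> nat \<Rightarrow> nat set \<Rightarrow> nat set \<Rightarrow> nat set \<Rightarrow> nat set \<Rightarrow> bool" where
  "P4 l n A B C D \<longleftrightarrow> A\<noteq>{} \<and> B\<noteq>{} \<and> C\<noteq>{} \<and> D\<noteq>{} \<and> short l n A \<and> short l n B \<and> short l n C \<and> short l n D
   \<and> A\<inter>B={} \<and> A\<inter>C={} \<and> A\<inter>D={} \<and> B\<inter>C={} \<and> B\<inter>D={} \<and> C\<inter>D={} \<and> A\<union>B\<union>C\<union>D={1..n}"

lemma gadjI: "gvertex l n v \<Longrightarrow> gvertex l n w \<Longrightarrow> \<not> cyc_eq v w \<Longrightarrow> admissible l n e \<Longrightarrow> length e = 4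
  \<Longrightarrow> p \<in> merges e \<Longrightarrow> q \<in> merges e \<Longrightarrow> cyc_eq p v \<Longrightarrow> cyc_eq q w \<Longrightarrow> gadj l n v w"
  unfolding gadj_def by blast

lemma merge12:
  assumes "P4 l n A B C D" "short l n (A\<union>B)" "short l n (B\<union>C)"
  shows "gadj l n [A\<union>B,C,D] [A,B\<union>C,D]" "gadj l n [A,B\<union>C,D] [A\<union>B,C,D]"
proof -
  from assms(1) have h: "A\<noteq>{}" "B\<noteq>{}" "C\<noteq>{}" "D\<noteq>{}" "short l n A" "short l n B" "short l n C" "short l n D"
   "A\<inter>B={}" "A\<inter>C={}" "A\<inter>D={}" "B\<inter>C={}" "B\<inter>D={}" "C\<inter>D={}" "A\<union>B\<union>C\<union>D={1..n}"
    unfolding P4_def by simp_all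
  have v1: "gvertex l n [A\<union>B,C,D]" unfolding gv3
    using h assms(2) by (intro conjI) (simp_all add: Int_Un_distrib Int_Un_distrib2 Un_assoc)
  have v2: "gvertex l n [A,B\<union>C,D]" unfolding gv3
    using h assms(3) by (intro conjI) (simp_all add: Int_Un_distrib Int_Un_distrib2 Un_assoc)
  have e: "admissible l n [A,B,C,D]" using h by (intro adm4)
  have nc: "\<not> cyc_eq [A\<union>B,C,D] [A,B\<union>C,D]"
    apply (rule ncyc[of A]) using h by auto
  have nc2: "\<not> cyc_eq [A,B\<union>C,D] [A\<union>B,C,D]"
    using nc cyc_sym by blast
  have m: "[A\<union>B,C,D] \<in> merges [A,B,C,D]" "[A,B\<union>C,D] \<in> merges [A,B,C,D]" by (simp_all add: merges4)
  show "gadj l n [A\<union>B,C,D] [A,B\<union>C,D]"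
    by (rule gadjI[OF v1 v2 nc e _ m(1) m(2) cyc_refl cyc_refl]) simp
  show "gadj l n [A,B\<union>C,D] [A\<union>B,C,D]"
    by (rule gadjI[OF v2 v1 nc2 e _ m(2) m(1) cyc_refl cyc_refl]) simp
qed
lemma merge23:
  assumes "P4 l n A B C D" "short l n (B\<union>C)" "short l n (C\<union>D)"
  shows "gadj l n [A,B\<union>C,D] [A,B,C\<union>D]" "gadj l n [A,B,C\<union>D] [A,B\<union>C,D]"
proof -
  from assms(1) have h: "A\<noteq>{}" "B\<noteq>{}" "C\<noteq>{}" "D\<noteq>{}" "short l n A" "short l n B" "short l n C" "short l n D"
   "A\<inter>B={}" "A\<inter>C={}" "A\<inter>D={}" "B\<inter>C={}" "B\<inter>D={}" "C\<inter>D={}" "A\<union>B\<union>C\<union>D={1..n}"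
    unfolding P4_def by simp_all
  have v1: "gvertex l n [A,B\<union>C,D]" unfolding gv3
    using h assms(2) by (intro conjI) (simp_all add: Int_Un_distrib Int_Un_distrib2 Un_assoc)
  have v2: "gvertex l n [A,B,C\<union>D]" unfolding gv3
    using h assms(3) by (intro conjI) (simp_all add: Int_Un_distrib Int_Un_distrib2 Un_assoc)
  have e: "admissible l n [A,B,C,D]" using h by (intro adm4)
  have nc: "\<not> cyc_eq [A,B\<union>C,D] [A,B,C\<union>D]"
    apply (rule ncyc[of B]) using h by auto
  have nc2: "\<not> cyc_eq [A,B,C\<union>D] [A,B\<union>C,D]"
    using nc cyc_sym by blast
  have m: "[A,B\<union>C,D] \<in> merges [A,B,C,D]" "[A,B,C\<union>D] \<in> merges [A,B,C,D]" by (simp_all add: merges4)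
  show "gadj l n [A,B\<union>C,D] [A,B,C\<union>D]"
    by (rule gadjI[OF v1 v2 nc e _ m(1) m(2) cyc_refl cyc_refl]) simp
  show "gadj l n [A,B,C\<union>D] [A,B\<union>C,D]"
    by (rule gadjI[OF v2 v1 nc2 e _ m(2) m(1) cyc_refl cyc_refl]) simp
qed

lemma merge14:
  assumes "P4 l n A B C D" "short l n (A\<union>B)" "short l n (D\<union>A)"
  shows "gadj l n [A\<union>B,C,D] [B,C,D\<union>A]"
proof -
  from assms(1) have h: "A\<noteq>{}" "B\<noteq>{}" "C\<noteq>{}" "D\<noteq>{}" "short l n A" "short l n B" "short l n C" "short l n D"
   "A\<inter>B={}" "A\<inter>C={}" "A\<inter>D={}" "B\<inter>C={}" "B\<inter>D={}" "C\<inter>D={}" "A\<union>B\<union>C\<union>D={1..n}"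
    unfolding P4_def by simp_all
  have v1: "gvertex l n [A\<union>B,C,D]" unfolding gv3
    using h assms(2) by (intro conjI) (simp_all add: Int_Un_distrib Int_Un_distrib2 Un_assoc)
  have v2: "gvertex l n [B,C,D\<union>A]" unfolding gv3
    using h assms(3) by (intro conjI) (auto simp add: Int_Un_distrib Int_Un_distrib2 Un_assoc)
  have e: "admissible l n [A,B,C,D]" using h by (intro adm4)
  have nc: "\<not> cyc_eq [A\<union>B,C,D] [B,C,D\<union>A]"
    apply (rule ncyc[of B]) using h by auto
  have m: "[A\<union>B,C,D] \<in> merges [A,B,C,D]" "[D\<union>A,B,C] \<in> merges [A,B,C,D]" by (simp_all add: merges4)
  show ?thesis
    by (rule gadjI[OF v1 v2 nc e _ m(1) m(2) cyc_refl cyc_rot1]) simp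
qed

lemma gpath_single: "gvertex l n v \<Longrightarrow> gpath l n [v]"
  unfolding gpath_def by simp

lemma gpath_cons: "gadj l n v w \<Longrightarrow> gpath l n (w#ps) \<Longrightarrow> gpath l n (v#w#ps)"
  unfolding gpath_def
  apply (intro conjI)
    apply simp
   apply (intro allI impI)
  subgoal for i by (cases i) auto
  apply (auto simp: gadj_def)
  done

lemma gpath_consD:
  assumes "gpath l n (v#w#ps)"
  shows "gadj l n v w \<and> gpath l n (w#ps)"
proof -
  from assms have h: "\<forall>i. Suc i < length (v#w#ps) \<longrightarrow> gadj l n ((v#w#ps)!i) ((v#w#ps)!Suc i)"
    and s: "\<forall>p\<in>set (v#w#ps). gvertex l n p" by (auto simp: gpath_def)
  have 1: "gadj l n v w" using h[rule_format, of 0] by simp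
  have "\<forall>i. Suc i < length (w#ps) \<longrightarrow> gadj l n ((w#ps)!i) ((w#ps)!Suc i)"
  proof (intro allI impI)
    fix i assume "Suc i < length (w#ps)"
    thus "gadj l n ((w#ps)!i) ((w#ps)!Suc i)" using h[rule_format, of "Suc i"] by simp
  qed
  hence "gpath l n (w#ps)" using s by (simp add: gpath_def)
  thus ?thesis using 1 by simp
qed

lemma gpath_snoc: "gpath l n xs \<Longrightarrow> gadj l n (last xs) w \<Longrightarrow> gpath l n (xs @ [w])"
proof (induction xs)
  case Nil thus ?case by (simp add: gpath_def)
next
  case (Cons x xs)
  show ?case
  proof (cases xs)
    case Nil thus ?thesis using Cons gpath_cons[of l n x w "[]"] gpath_single[of l n w] by (simp add: gadj_def)
  next
    case (Cons y zs)
    have a: "gadj l n x y" "gpath l n (y#zs)" using gpath_consD Cons \<open>gpath l n (x # xs)\<close> by auto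
    have "gpath l n (xs @ [w])" using Cons a \<open>gadj l n (last (x # xs)) w\<close> \<open>gpath l n xs \<Longrightarrow> gadj l n (last xs) w \<Longrightarrow> gpath l n (xs @ [w])\<close> by simp
    thus ?thesis using gpath_cons[of l n x y "zs @ [w]"] a Cons by simp
  qed
qed

lemma gpath_rev: "gpath l n ps \<Longrightarrow> gpath l n (rev ps)"
proof (induction ps)
  case Nil thus ?case by (simp add: gpath_def)
next
  case (Cons x xs)
  show ?case
  proof (cases xs)
    case Nil thus ?thesis using Cons by simp
  next
    case (Cons y zs)
    have a: "gadj l n x y" "gpath l n (y#zs)" using gpath_consD Cons \<open>gpath l n (x # xs)\<close> by auto
    have "gpath l n (rev xs)" using Cons a \<open>gpath l n xs \<Longrightarrow> gpath l n (rev xs)\<close> by simp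
    moreover have "last (rev xs) = y" using Cons by simp
    ultimately show ?thesis using gpath_snoc[of l n "rev xs" x] gadj_sym[OF a(1)] by simp
  qed
qed

lemma gpath_extend: "gadj l n v (hd ps) \<Longrightarrow> gpath l n ps \<Longrightarrow> gadj l n (last ps) w \<Longrightarrow> gpath l n (v # ps @ [w])"
proof -
  assume a: "gadj l n v (hd ps)" "gpath l n ps" "gadj l n (last ps) w"
  have "ps \<noteq> []" using a(2) by (simp add: gpath_def)
  then obtain u us where ps: "ps = u # us" by (cases ps) auto
  have g: "gpath l n (u # (us @ [w]))" using gpath_snoc[OF a(2) a(3)] ps by simp
  have "gadj l n v u" using a(1) ps by simp
  from gpath_cons[OF this g] show ?thesis using ps by simp
qed



lemma short_sub:
  assumes pos: "\<forall>i\<in>{1..n}. 0 < l i" and "short l n A" "B \<subseteq> A" "A \<subseteq> {1..n}"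
  shows "short l n B"
proof -
  have "finite A" using assms(4) finite_subset by blast
  hence "sum l B \<le> sum l A" using assms by (intro sum_mono2) (auto intro: less_imp_le)
  thus ?thesis using assms(2) unfolding short_def by linarith
qed

lemma swap:
  assumes pos: "\<forall>i\<in>{1..n}. 0 < l i" and g: "gvertex l n [P,X,Y]"
    and q: "q \<in> X" "X - {q} \<noteq> {}"
    and s1: "short l n ((X - {q}) \<union> Y)" and s2: "short l n ({q} \<union> Y)"
  shows "gpath l n [[P,X,Y],[P,X-{q},{q}\<union>Y],[P,(X-{q})\<union>Y,{q}],[P,Y,X]]"
proof -
  define X0 where "X0 = X - {q}"
  have X: "X0 \<union> {q} = X" using q unfolding X0_def by blast
  have h: "P\<noteq>{}" "X\<noteq>{}" "Y\<noteq>{}" "short l n P" "short l n X" "short l n Y"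
   "P\<inter>X={}" "P\<inter>Y={}" "X\<inter>Y={}" "P\<union>X\<union>Y={1..n}" using g unfolding gv3 by simp_all
  have sX0: "short l n X0" using short_sub[OF pos h(5)] h(10) unfolding X0_def by blast
  have sq: "short l n {q}" using short_sub[OF pos h(5)] h(10) q by blast
  have p1: "P4 l n P X0 {q} Y" unfolding P4_def using h sX0 sq q X0_def by auto
  have p2: "P4 l n P X0 Y {q}" unfolding P4_def using h sX0 sq q X0_def by auto
  have p3: "P4 l n P Y X0 {q}" unfolding P4_def using h sX0 sq q X0_def by auto
  have e1: "gadj l n [P,X,Y] [P,X0,{q}\<union>Y]"
    using merge23(1)[OF p1] X h s2 by simp
  have e2: "gadj l n [P,X0,{q}\<union>Y] [P,X0\<union>Y,{q}]"
    using merge23(2)[OF p2] s1 s2 X0_def by (simp add: Un_commute)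
  have e3: "gadj l n [P,X0\<union>Y,{q}] [P,Y,X]"
    using merge23(1)[OF p3] s1 X h X0_def by (simp add: Un_commute)
  have "gvertex l n [P,Y,X]" using e3 unfolding gadj_def by blast
  thus ?thesis using e1 e2 e3 unfolding X0_def
    by (intro gpath_cons gpath_single) auto
qed

lemma extend:
  assumes pos: "\<forall>i\<in>{1..n}. 0 < l i" and g: "gvertex l n [I,J,K]"
    and S: "S \<subseteq> J" "S \<noteq> {}" "J - S \<noteq> {}" "short l n (I \<union> S)"
    and ps: "gpath l n ps" "hd ps = [I\<union>S, J-S, K]" "last ps = [I\<union>S, K, J-S]"
  shows "gpath l n ([I,J,K] # ps @ [[I,K,J]])"
proof -
  have h: "I\<noteq>{}" "J\<noteq>{}" "K\<noteq>{}" "short l n I" "short l n J" "short l n K"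
   "I\<inter>J={}" "I\<inter>K={}" "J\<inter>K={}" "I\<union>J\<union>K={1..n}" using g unfolding gv3 by simp_all
  have sS: "short l n S" using short_sub[OF pos h(5)] h(10) S by blast
  have sJS: "short l n (J-S)" using short_sub[OF pos h(5)] h(10) S by blast
  have p1: "P4 l n I S (J-S) K" unfolding P4_def using h S sS sJS by auto
  have p2: "P4 l n S I K (J-S)" unfolding P4_def using h S sS sJS by auto
  have JS: "S \<union> (J - S) = J" "(J - S) \<union> S = J" using S by auto
  have e1: "gadj l n [I,J,K] [I\<union>S,J-S,K]"
    using merge12(2)[OF p1] S h JS by simp
  have e2: "gadj l n [I\<union>S,K,J-S] [I,K,J]"
    using merge14[OF p2] S h JS by (simp add: Un_commute)
  show ?thesis using gpath_extend[of l n "[I,J,K]" ps "[I,K,J]"] e1 e2 ps by simp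
qed



lemma greedy:
  fixes f :: "nat \<Rightarrow> real"
  assumes "finite Z" "\<forall>z\<in>Z. f z \<le> w" "0 \<le> lo" "lo < sum f Z"
  shows "\<exists>S\<subseteq>Z. S \<noteq> {} \<and> lo < sum f S \<and> sum f S \<le> lo + w"
  using assms
proof (induction Z rule: finite_induct)
  case empty thus ?case by simp
next
  case (insert z F)
  show ?case
  proof (cases "lo < sum f F")
    case True
    then obtain S where "S \<subseteq> F" "S \<noteq> {}" "lo < sum f S" "sum f S \<le> lo + w" using insert by auto
    thus ?thesis by blast
  next
    case False
    have "sum f (insert z F) = f z + sum f F" using insert by simp
    moreover have "f z \<le> w" using insert by simp
    ultimately show ?thesis using False insert.prems(3)
      by (intro exI[of _ "insert z F"]) auto
  qed
qed

lemma has_max: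
  fixes l :: "nat \<Rightarrow> real"
  assumes "finite J" "J \<noteq> {}"
  obtains x where "x \<in> J" "\<forall>j\<in>J. l j \<le> l x"
proof -
  have "Max (l ` J) \<in> l ` J" using assms by simp
  then obtain x where "x \<in> J" "l x = Max (l ` J)" by auto
  moreover have "\<forall>j\<in>J. l j \<le> Max (l ` J)" using assms by simp
  ultimately show ?thesis using that by auto
qed

lemma gv_parts:
  assumes "gvertex l n [I,J,K]"
  shows "I\<noteq>{}" "J\<noteq>{}" "K\<noteq>{}" "sum l I < total_len l n / 2" "sum l J < total_len l n / 2" "sum l K < total_len l n / 2"
   "I\<inter>J={}" "I\<inter>K={}" "J\<inter>K={}" "I\<union>J\<union>K={1..n}"
   "finite I" "finite J" "finite K"
   "sum l I + sum l J + sum l K = total_len l n"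
proof -
  show h: "I\<noteq>{}" "J\<noteq>{}" "K\<noteq>{}" "sum l I < total_len l n / 2" "sum l J < total_len l n / 2" "sum l K < total_len l n / 2"
   "I\<inter>J={}" "I\<inter>K={}" "J\<inter>K={}" "I\<union>J\<union>K={1..n}"
    using assms unfolding gv3 short_def by simp_all
  show f: "finite I" "finite J" "finite K" using h(10) by (metis finite_Un finite_atLeastAtMost)+
  have "total_len l n = sum l (I\<union>J\<union>K)" unfolding total_len_def using h(10) by simp
  also have "\<dots> = sum l (I \<union> J) + sum l K" using f h by (intro sum.union_disjoint) auto
  also have "sum l (I \<union> J) = sum l I + sum l J" using f h by (intro sum.union_disjoint) auto
  finally show "sum l I + sum l J + sum l K = total_len l n" by simp
qed

lemma gv_swap: "gvertex l n [I,J,K] \<Longrightarrow> gvertex l n [I,K,J]"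
  unfolding gv3 by (auto simp: Int_commute Un_ac)

definition GP :: "(nat \<Rightarrow> real) \<Rightarrow> nat \<Rightarrow> nat set list \<Rightarrow> nat set list \<Rightarrow> bool" where
  "GP l n v w \<longleftrightarrow> (\<exists>ps. gpath l n ps \<and> hd ps = v \<and> last ps = w \<and> length ps \<le> 7)"

lemma GP_rev: "GP l n v w \<Longrightarrow> GP l n w v"
  unfolding GP_def
proof -
  assume "\<exists>ps. gpath l n ps \<and> hd ps = v \<and> last ps = w \<and> length ps \<le> 7"
  then obtain ps where ps: "gpath l n ps" "hd ps = v" "last ps = w" "length ps \<le> 7" by blast
  have "ps \<noteq> []" using ps(1) by (simp add: gpath_def)
  thus "\<exists>ps. gpath l n ps \<and> hd ps = w \<and> last ps = v \<and> length ps \<le> 7"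
    using ps gpath_rev[OF ps(1)] by (intro exI[of _ "rev ps"]) (simp add: hd_rev last_rev)
qed

context
  fixes l :: "nat \<Rightarrow> real" and n :: nat
  assumes pos: "\<forall>i\<in>{1..n}. 0 < l i"
begin

lemma pathC1:
  assumes g: "gvertex l n [I,J,K]" and x: "x \<in> J" "J - {x} \<noteq> {}"
    and s1: "short l n ((J - {x}) \<union> K)" and s2: "short l n ({x} \<union> K)"
  shows "GP l n [I,J,K] [I,K,J]"
  unfolding GP_def using swap[OF pos g x s1 s2]
  by (intro exI[of _ "[[I,J,K],[I,J-{x},{x}\<union>K],[I,(J-{x})\<union>K,{x}],[I,K,J]]"]) simp

lemma pathC2:
  assumes g: "gvertex l n [I,J,K]" and S: "S \<subseteq> J" "S \<noteq> {}" "J - S \<noteq> {}" "short l n (I \<union> S)"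
    and x: "x \<in> J - S" "(J - S) - {x} \<noteq> {}"
    and s1: "short l n (((J - S) - {x}) \<union> K)" and s2: "short l n ({x} \<union> K)"
  shows "GP l n [I,J,K] [I,K,J]"
proof -
  have h: "I\<noteq>{}" "J\<noteq>{}" "K\<noteq>{}" "short l n I" "short l n J" "short l n K"
   "I\<inter>J={}" "I\<inter>K={}" "J\<inter>K={}" "I\<union>J\<union>K={1..n}" using g unfolding gv3 by simp_all
  have sJS: "short l n (J-S)" using short_sub[OF pos h(5)] h(10) S by blast
  have g2: "gvertex l n [I\<union>S, J-S, K]" unfolding gv3 using h S sJS by auto
  note sw = swap[OF pos g2 x s1 s2]
  define ps where "ps = [[I\<union>S,J-S,K],[I\<union>S,(J-S)-{x},{x}\<union>K],[I\<union>S,((J-S)-{x})\<union>K,{x}],[I\<union>S,K,J-S]]"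
  have "gpath l n ([I,J,K] # ps @ [[I,K,J]])"
    using extend[OF pos g S, of ps] sw unfolding ps_def by simp
  thus ?thesis unfolding GP_def by (intro exI[of _ "[I,J,K] # ps @ [[I,K,J]]"]) (simp add: ps_def)
qed

lemma pathC3:
  assumes g: "gvertex l n [I,J,K]" and S: "S \<subseteq> J" "S \<noteq> {}" "J - S \<noteq> {}" "short l n (I \<union> S)"
    and y: "y \<in> K" "K - {y} \<noteq> {}"
    and s1: "short l n ((K - {y}) \<union> (J - S))" and s2: "short l n ({y} \<union> (J - S))"
  shows "GP l n [I,J,K] [I,K,J]"
proof -
  have h: "I\<noteq>{}" "J\<noteq>{}" "K\<noteq>{}" "short l n I" "short l n J" "short l n K"
   "I\<inter>J={}" "I\<inter>K={}" "J\<inter>K={}" "I\<union>J\<union>K={1..n}" using g unfolding gv3 by simp_all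
  have sJS: "short l n (J-S)" using short_sub[OF pos h(5)] h(10) S by blast
  have g2: "gvertex l n [I\<union>S, K, J-S]" unfolding gv3 using h S sJS by auto
  note sw = gpath_rev[OF swap[OF pos g2 y s1 s2]]
  define ps where "ps = rev [[I\<union>S,K,J-S],[I\<union>S,K-{y},{y}\<union>(J-S)],[I\<union>S,(K-{y})\<union>(J-S),{y}],[I\<union>S,J-S,K]]"
  have "gpath l n ([I,J,K] # ps @ [[I,K,J]])"
    using extend[OF pos g S, of ps] sw unfolding ps_def by simp
  thus ?thesis unfolding GP_def by (intro exI[of _ "[I,J,K] # ps @ [[I,K,J]]"]) (simp add: ps_def)
qed

end



context
  fixes l :: "nat \<Rightarrow> real" and n :: nat and a :: nat
  assumes pos: "\<forall>i\<in>{1..n}. 0 < l i"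
    and gen: "\<forall>A. A \<subseteq> {1..n} \<longrightarrow> sum l A \<noteq> total_len l n / 2"
    and pair: "\<forall>p\<in>{1..n}. \<forall>q\<in>{1..n}. p \<noteq> a \<longrightarrow> q \<noteq> a \<longrightarrow> p \<noteq> q \<longrightarrow> l p + l q < total_len l n / 2"
begin

lemma sum_pos_sub: "A \<subseteq> {1..n} \<Longrightarrow> A \<noteq> {} \<Longrightarrow> 0 < sum l A"
  using pos by (intro sum_pos) (auto intro: finite_subset)

lemma sideA:
  assumes g: "gvertex l n [I,J,K]" and x: "x \<in> J" and xmax: "\<forall>j\<in>J. l j \<le> l x"
    and r: "sum l (J - {x}) > total_len l n / 2 - sum l I"
  shows "GP l n [I,J,K] [I,K,J]"
proof -
  note P = gv_parts[OF g]
  define H where "H = total_len l n / 2"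
  have tot: "sum l I + sum l J + sum l K = 2*H" using P(14) unfolding H_def by simp
  have sI: "sum l I < H" "sum l J < H" "sum l K < H" using P unfolding H_def by auto
  have sJx: "sum l (J - {x}) = sum l J - l x" using P(12) x by (simp add: sum_diff1)
  have Jn: "J \<subseteq> {1..n}" "I \<subseteq> {1..n}" "K \<subseteq> {1..n}" using P(10) by auto
  have ne: "J - {x} \<noteq> {}"
  proof
    assume "J - {x} = {}"
    hence "sum l (J - {x}) = 0" by (metis sum.empty)
    thus False using r sI unfolding H_def by linarith
  qed
  have xI: "x \<notin> I" "x \<notin> K" using x P(7) P(9) by auto
  have gx: "sum l (I \<union> {x}) \<noteq> H" using gen Jn x unfolding H_def by auto
  have sIx: "sum l (I \<union> {x}) = sum l I + l x" using P(11) xI by simp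
  have sJxK: "sum l ((J - {x}) \<union> K) = sum l J - l x + sum l K"
    using P(12,13) P(9) sJx by (subst sum.union_disjoint) auto
  have sxK: "sum l ({x} \<union> K) = l x + sum l K" using P(13) xI by simp
  have lxpos: "0 < l x" using pos Jn x by auto
  show ?thesis
  proof (cases "l x > H - sum l I")
    case True
    show ?thesis
      apply (rule pathC1[OF pos g x ne])
      unfolding short_def H_def[symmetric] using sJxK sxK tot True r sJx unfolding H_def by linarith+
  next
    case False
    hence lx: "l x < H - sum l I" using gx sIx by auto
    have lo: "H - sum l I - l x < sum l (J - {x})" using r lxpos unfolding H_def by linarith
    have fJ: "finite (J - {x})" using P(12) by simp
    have wJ: "\<forall>z\<in>J - {x}. l z \<le> l x" using xmax by auto
    have lo0: "0 \<le> H - sum l I - l x" using lx by linarith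
    obtain S where S: "S \<subseteq> J - {x}" "S \<noteq> {}" "H - sum l I - l x < sum l S" "sum l S \<le> H - sum l I - l x + l x"
      using greedy[OF fJ wJ lo0 lo] by blast
    have SI: "S \<inter> I = {}" using S P(7) by auto
    have sub: "I \<union> S \<subseteq> {1..n}" using Jn S(1) by auto
    have gS: "sum l (I \<union> S) \<noteq> H" using gen[rule_format, OF sub] unfolding H_def by auto
    have fS: "finite S" using S P(12) finite_subset by blast
    have sIS: "sum l (I \<union> S) = sum l I + sum l S" using P(11) fS SI by (subst sum.union_disjoint) auto
    have sS: "sum l S < H - sum l I" using S(4) gS sIS by auto
    have xS: "x \<in> J - S" using x S by auto
    have eqd: "(J - S) - {x} = (J - {x}) - S" by auto
    have sd: "sum l ((J - S) - {x}) = sum l (J - {x}) - sum l S"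
      unfolding eqd using P(12) S by (subst sum_diff) auto
    have nd: "(J - S) - {x} \<noteq> {}"
    proof
      assume "(J - S) - {x} = {}"
      hence "sum l ((J - S) - {x}) = 0" by (metis sum.empty)
      thus False using sd sS r unfolding H_def by linarith
    qed
    have sdK: "sum l (((J - S) - {x}) \<union> K) = sum l (J - {x}) - sum l S + sum l K"
      using P(12,13) P(9) sd by (subst sum.union_disjoint) auto
    show ?thesis
      apply (rule pathC2[OF pos g _ S(2) _ _ xS nd])
      using S(1) apply blast
      using xS apply blast
      unfolding short_def H_def[symmetric] using sIS sS sdK sxK tot S r sJx unfolding H_def by linarith+
  qed
qed

lemma sideB:
  assumes g: "gvertex l n [I,J,K]" and aI: "a \<in> I" and x: "x \<in> J" and y: "y \<in> K"
    and ne: "J - {x} \<noteq> {}"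
    and r1: "sum l (J - {x}) < total_len l n / 2 - sum l I"
    and r2: "l y + sum l (J - {x}) > total_len l n / 2 - sum l I"
  shows "GP l n [I,J,K] [I,K,J]"
proof -
  note P = gv_parts[OF g]
  define H where "H = total_len l n / 2"
  have tot: "sum l I + sum l J + sum l K = 2*H" using P(14) unfolding H_def by simp
  have sI: "sum l I < H" "sum l J < H" "sum l K < H" using P unfolding H_def by auto
  have sJx: "sum l (J - {x}) = sum l J - l x" using P(12) x by (simp add: sum_diff1)
  have sKy: "sum l (K - {y}) = sum l K - l y" using P(13) y by (simp add: sum_diff1)
  have Jn: "J \<subseteq> {1..n}" "I \<subseteq> {1..n}" "K \<subseteq> {1..n}" using P(10) by auto
  have xa: "x \<noteq> a" "y \<noteq> a" "x \<noteq> y" using x y aI P(7,8,9) by auto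
  have xyn: "x \<in> {1..n}" "y \<in> {1..n}" using Jn x(1) y(1) by auto
  have pxy: "l x + l y < H" using pair[rule_format, OF xyn xa] unfolding H_def by simp
  define S where "S = J - {x}"
  have S: "S \<subseteq> J" "S \<noteq> {}" "J - S \<noteq> {}" using ne x unfolding S_def by auto
  have JS: "J - S = {x}" using x unfolding S_def by auto
  have SI: "S \<inter> I = {}" using S P(7) by auto
  have sIS: "sum l (I \<union> S) = sum l I + sum l S" using P(11,12) SI unfolding S_def
    by (subst sum.union_disjoint) auto
  have sIS': "short l n (I \<union> S)" unfolding short_def H_def[symmetric] using sIS r1 unfolding S_def H_def by linarith
  have Kne: "K - {y} \<noteq> {}"
  proof
    assume "K - {y} = {}"
    hence "sum l (K - {y}) = 0" by (metis sum.empty)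
    thus False using sKy tot sJx pxy r1 unfolding H_def[symmetric] by linarith
  qed
  have xK: "x \<notin> K - {y}" using x P(9) by auto
  have s1: "sum l ((K - {y}) \<union> {x}) = sum l K - l y + l x" using P(13) xK sKy by simp
  have s2: "sum l ({y} \<union> {x}) = l y + l x" using xa by simp
  show ?thesis
    apply (rule pathC3[OF pos g S sIS' y Kne])
    unfolding JS short_def H_def[symmetric] using s1 s2 tot sJx r2 pxy unfolding H_def by linarith+
qed

lemma core:
  assumes g: "gvertex l n [I,J,K]" and aI: "a \<in> I"
  shows "GP l n [I,J,K] [I,K,J]"
proof -
  note P = gv_parts[OF g]
  have g': "gvertex l n [I,K,J]" using gv_swap[OF g] .
  define H where "H = total_len l n / 2"
  obtain x where x: "x \<in> J" "\<forall>j\<in>J. l j \<le> l x" using has_max[OF P(12) P(2)] by blast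
  obtain y where y: "y \<in> K" "\<forall>j\<in>K. l j \<le> l y" using has_max[OF P(13) P(3)] by blast
  have tot: "sum l I + sum l J + sum l K = 2*H" using P(14) unfolding H_def by simp
  have sI: "sum l I < H" "sum l J < H" "sum l K < H" using P unfolding H_def by auto
  have Ipos: "0 < sum l I" using sum_pos_sub P(1) P(10) by auto
  have sJx: "sum l (J - {x}) = sum l J - l x" using P(12) x by (simp add: sum_diff1)
  have sKy: "sum l (K - {y}) = sum l K - l y" using P(13) y by (simp add: sum_diff1)
  have Jn: "J \<subseteq> {1..n}" "I \<subseteq> {1..n}" "K \<subseteq> {1..n}" using P(10) by auto
  have xa: "x \<noteq> a" "y \<noteq> a" "x \<noteq> y" using x y aI P(7,8,9) by auto
  have xyn: "x \<in> {1..n}" "y \<in> {1..n}" using Jn x(1) y(1) by auto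
  have pxy: "l x + l y < H" using pair[rule_format, OF xyn xa] unfolding H_def by simp
  have nn: "\<forall>i\<in>J - {x}. 0 \<le> l i" "\<forall>i\<in>K - {y}. 0 \<le> l i" using pos Jn by (auto intro: less_imp_le)
  have rJ0: "sum l (J - {x}) \<ge> 0" "sum l (K - {y}) \<ge> 0" using nn by (auto intro: sum_nonneg)
  have ss: "I \<union> (J - {x}) \<subseteq> {1..n}" "I \<union> (K - {y}) \<subseteq> {1..n}"
     "I \<union> (J - {x}) \<union> {y} \<subseteq> {1..n}" "I \<union> (K - {y}) \<union> {x} \<subseteq> {1..n}" using Jn xyn by auto
  have g1: "sum l (I \<union> (J - {x})) \<noteq> H" "sum l (I \<union> (K - {y})) \<noteq> H"
    using gen[rule_format, OF ss(1)] gen[rule_format, OF ss(2)] unfolding H_def by auto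
  have e1: "sum l (I \<union> (J - {x})) = sum l I + sum l (J - {x})"
    using P(11,12) P(7) by (subst sum.union_disjoint) auto
  have e2: "sum l (I \<union> (K - {y})) = sum l I + sum l (K - {y})"
    using P(11,13) P(8) by (subst sum.union_disjoint) auto
  have g3: "sum l (I \<union> (J - {x}) \<union> {y}) \<noteq> H" "sum l (I \<union> (K - {y}) \<union> {x}) \<noteq> H"
    using gen[rule_format, OF ss(3)] gen[rule_format, OF ss(4)] unfolding H_def by auto
  have yn: "y \<notin> I \<union> (J - {x})" using y(1) P(8,9) by auto
  have e3: "sum l (I \<union> (J - {x}) \<union> {y}) = sum l I + sum l (J - {x}) + l y"
    using e1 yn P(11,12) by simp
  have xn: "x \<notin> I \<union> (K - {y})" using x(1) P(7,9) by auto
  have e4: "sum l (I \<union> (K - {y}) \<union> {x}) = sum l I + sum l (K - {y}) + l x"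
    using e2 xn P(11,13) by simp
  show ?thesis
  proof (cases "sum l (J - {x}) > H - sum l I")
    case True thus ?thesis using sideA[OF g x] unfolding H_def by simp
  next
    case nJ: False
    show ?thesis
    proof (cases "sum l (K - {y}) > H - sum l I")
      case True thus ?thesis using sideA[OF g' y] GP_rev unfolding H_def by auto
    next
      case nK: False
      have rJ: "sum l (J - {x}) < H - sum l I" using nJ g1 e1 by auto
      have rK: "sum l (K - {y}) < H - sum l I" using nK g1 e2 by auto
      show ?thesis
      proof (cases "J - {x} \<noteq> {} \<and> l y + sum l (J - {x}) > H - sum l I")
        case True thus ?thesis using sideB[OF g aI x(1) y(1)] rJ unfolding H_def by auto
      next
        case c1: False
        show ?thesis
        proof (cases "K - {y} \<noteq> {} \<and> l x + sum l (K - {y}) > H - sum l I")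
          case True thus ?thesis using sideB[OF g' aI y(1) x(1)] rK GP_rev unfolding H_def by auto
        next
          case c2: False
          have d1: "sum l (J - {x}) = 0 \<or> l y + sum l (J - {x}) < H - sum l I"
          proof (cases "J - {x} = {}")
            case True thus ?thesis by (metis sum.empty)
          next
            case False thus ?thesis using c1 g3(1) e3 by auto
          qed
          have d2: "sum l (K - {y}) = 0 \<or> l x + sum l (K - {y}) < H - sum l I"
          proof (cases "K - {y} = {}")
            case True thus ?thesis by (metis sum.empty)
          next
            case False thus ?thesis using c2 g3(2) e4 by auto
          qed
          show ?thesis using d1 d2 tot sI Ipos pxy sJx sKy rJ0 by linarith
        qed
      qed
    qed
  qed
qed

end



theorem mainTheorem6:
  fixes l :: "nat \<Rightarrow> real" and n a b c :: nat
  assumes "n \<ge> 4"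
    and "length_vector l n"
    and "generic l n"
    and "a \<in> {1..n}" and "b \<in> {1..n}" and "c \<in> {1..n}"
    and "a \<noteq> b" and "a \<noteq> c" and "b \<noteq> c"
    and "l a \<ge> l b" and "l b \<ge> l c"
    and "\<forall>i\<in>{1..n} - {a, b, c}. l i \<le> l c"
    and "l b + l c < total_len l n / 2"
  shows "\<forall>v. gvertex l n v \<longrightarrow>
           (\<exists>ps. gpath l n ps \<and> cyc_eq (hd ps) v \<and> cyc_eq (last ps) (mirror v)
                 \<and> length ps - 1 \<le> 6)"
proof (intro allI impI)
  fix v assume gv: "gvertex l n v"
  have pos: "\<forall>i\<in>{1..n}. 0 < l i" using assms(2) unfolding length_vector_def by blast
  have gen: "\<forall>A. A \<subseteq> {1..n} \<longrightarrow> sum l A \<noteq> total_len l n / 2"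
  proof (intro allI impI)
    fix A assume A: "A \<subseteq> {1..n}"
    have "sum l A \<noteq> sum l ({1..n} - A)" using assms(3) A unfolding generic_def by blast
    moreover have "total_len l n = sum l A + sum l ({1..n} - A)"
      unfolding total_len_def using A by (metis finite_atLeastAtMost sum.subset_diff add.commute)
    ultimately show "sum l A \<noteq> total_len l n / 2" by linarith
  qed
  have leb: "\<forall>q\<in>{1..n}. q \<noteq> a \<longrightarrow> l q \<le> l b" using assms(11,12) by force
  have lec: "\<forall>q\<in>{1..n}. q \<noteq> a \<longrightarrow> q \<noteq> b \<longrightarrow> l q \<le> l c" using assms(12) by force
  have pair: "\<forall>p\<in>{1..n}. \<forall>q\<in>{1..n}. p \<noteq> a \<longrightarrow> q \<noteq> a \<longrightarrow> p \<noteq> q \<longrightarrow> l p + l q < total_len l n / 2"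
  proof (intro ballI impI)
    fix p q assume pq: "p \<in> {1..n}" "q \<in> {1..n}" "p \<noteq> a" "q \<noteq> a" "p \<noteq> q"
    show "l p + l q < total_len l n / 2"
    proof (cases "p = b")
      case True
      hence "l q \<le> l c" using lec pq by auto
      thus ?thesis using True assms(13) by simp
    next
      case False
      hence "l p \<le> l c" using lec pq by auto
      moreover have "l q \<le> l b" using leb pq by auto
      ultimately show ?thesis using assms(13) by linarith
    qed
  qed
  have "length v = 3" using gv unfolding gvertex_def by simp
  then obtain A B C where v: "v = [A,B,C]"
    by (auto simp: numeral_3_eq_3 length_Suc_conv)
  have gA: "gvertex l n [A,B,C]" using gv v by simp
  have gB: "gvertex l n [B,C,A]" using gA unfolding gv3 by (simp add: Int_commute Un_ac)
  have gC: "gvertex l n [C,A,B]" using gA unfolding gv3 by (simp add: Int_commute Un_ac)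
  have mv: "mirror v = [B,A,C]" using v by (simp add: mirror_def)
  have "a \<in> A \<union> B \<union> C" using gA assms(4) unfolding gv3 by auto
  then consider "a \<in> A" | "a \<in> B" | "a \<in> C" by blast
  thus "\<exists>ps. gpath l n ps \<and> cyc_eq (hd ps) v \<and> cyc_eq (last ps) (mirror v) \<and> length ps - 1 \<le> 6"
  proof cases
    case 1
    have "GP l n [A,B,C] [A,C,B]" using core[OF pos gen pair gA 1] .
    then obtain ps where ps: "gpath l n ps" "hd ps = [A,B,C]" "last ps = [A,C,B]" "length ps \<le> 7"
      unfolding GP_def by blast
    show ?thesis using ps v mv cyc_refl[of "[A,B,C]"] cyc_rot2[of A C B]
      by (intro exI[of _ ps]) auto
  next
    case 2
    have "GP l n [B,C,A] [B,A,C]" using core[OF pos gen pair gB 2] .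
    then obtain ps where ps: "gpath l n ps" "hd ps = [B,C,A]" "last ps = [B,A,C]" "length ps \<le> 7"
      unfolding GP_def by blast
    show ?thesis using ps v mv cyc_refl[of "[B,A,C]"] cyc_rot2[of B C A]
      by (intro exI[of _ ps]) auto
  next
    case 3
    have "GP l n [C,A,B] [C,B,A]" using core[OF pos gen pair gC 3] .
    then obtain ps where ps: "gpath l n ps" "hd ps = [C,A,B]" "last ps = [C,B,A]" "length ps \<le> 7"
      unfolding GP_def by blast
    show ?thesis using ps v mv cyc_rot1[of C A B] cyc_rot1[of C B A]
      by (intro exI[of _ ps]) auto
  qed
qed


end
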